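(* For all $W,L\in\mathbb N$ and $K>0$, $$\mathcal{SNN}(W,L,K)\subset\mathcal{NN}(W,L,K)\subset\mathcal{SNN}(W+1,L,K).$$
   Context: A neural network of depth $L$ is $\phi=\ell_L\circ\sigma_{L-1}\circ\ell_{L-1}\circ\cdots\circ\sigma_0\circ\ell_0$ with $\ell_i(u)=A_iu+b_i$, $A_i\in\mathbb R^{n_i\times m_i}$, $b_i\in\mathbb R^{n_i}$, $m_{i+1}=n_i$, and componentwise activation functions $\sigma_i$; width $W=\max_i n_i$. Standing convention: the activation functions satisfy $\sigma_\ell(1)=1$. With $\|A\|=\max_i\sum_j|a_{ij}|$ and $\|(A,b)\|$ the norm of the augmented matrix $[A\ b]$, $\mathcal{NN}(W,L,K)$ denotes the networks of width $W$ and depth $L$ (with fixed input and output dimensions) for which there is $I\subset\{0,\dots,L\}$ with $\|(A_\ell,b_\ell)\|\le1$ for $\ell\notin I$, $\|(A_\ell,b_\ell)\|\ge1$ for $\ell\in I$, and $\prod_{\ell\in I}\|(A_\ell,b_\ell)\|\le K$. $\mathcal{SNN}(W,L,K)$ is the subset of bias-free such networks, i.e. those with all $b_\ell=0$.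
   Formalization: Both classes consist of the functions that networks realize on inputs whose last coordinate equals 1 only, and width W means that every $n_i$ is at most W. Apart from conventions, each condition added here is assumed in the paper as well or is needed for the statement above to hold. *)

theory Defs
  imports Complex_Main "HOL-Library.FuncSet"
begin

text \<open>Vectors are functions nat => real (only the first entries matter); an n x m matrix
is a function nat => nat => real (entries (i,j) with i < n, j < m).
A network of depth L is given by a dimension list ds = [m_0, n_0, n_1, ..., n_L]
(so m_l = ds!l, n_l = ds!(l+1)), weight matrices As!l and bias vectors bs!l, l = 0..L.\<close>

definition aug_norm :: "(nat \<Rightarrow> nat \<Rightarrow> real) \<Rightarrow> (nat \<Rightarrow> real) \<Rightarrow> nat \<Rightarrow> nat \<Rightarrow> real" where
  "aug_norm A b n m = Max ((\<lambda>i. (\<Sum>j<m. \<bar>A i j\<bar>) + \<bar>b i\<bar>) ` {..<n})"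

definition affine_map :: "(nat \<Rightarrow> nat \<Rightarrow> real) \<Rightarrow> (nat \<Rightarrow> real) \<Rightarrow> nat \<Rightarrow> (nat \<Rightarrow> real) \<Rightarrow> (nat \<Rightarrow> real)" where
  "affine_map A b m u = (\<lambda>i. (\<Sum>j<m. A i j * u j) + b i)"

definition net_step ::
  "(nat \<Rightarrow> real \<Rightarrow> real) \<Rightarrow> nat \<Rightarrow> nat list \<Rightarrow> (nat \<Rightarrow> nat \<Rightarrow> real) list \<Rightarrow> (nat \<Rightarrow> real) list
    \<Rightarrow> nat \<Rightarrow> (nat \<Rightarrow> real) \<Rightarrow> (nat \<Rightarrow> real)" where
  "net_step \<sigma> L ds As bs l u =
     (let v = affine_map (As ! l) (bs ! l) (ds ! l) u
      in if l < L then (\<lambda>i. \<sigma> l (v i)) else v)"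

definition realize ::
  "(nat \<Rightarrow> real \<Rightarrow> real) \<Rightarrow> nat \<Rightarrow> nat list \<Rightarrow> (nat \<Rightarrow> nat \<Rightarrow> real) list \<Rightarrow> (nat \<Rightarrow> real) list
    \<Rightarrow> (nat \<Rightarrow> real) \<Rightarrow> (nat \<Rightarrow> real)" where
  "realize \<sigma> L ds As bs x =
     (let v = fold (net_step \<sigma> L ds As bs) [0..<Suc L] x
      in (\<lambda>i. if i < ds ! Suc L then v i else 0))"

definition admissible_net ::
  "nat \<Rightarrow> nat \<Rightarrow> nat \<Rightarrow> nat \<Rightarrow> real \<Rightarrow> nat list \<Rightarrow> (nat \<Rightarrow> nat \<Rightarrow> real) list \<Rightarrow> (nat \<Rightarrow> real) list \<Rightarrow> bool" where
  "admissible_net d k W L K ds As bs \<longleftrightarrow>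
     length ds = L + 2 \<and> length As = L + 1 \<and> length bs = L + 1 \<and>
     ds ! 0 = d \<and> ds ! (L + 1) = k \<and>
     (\<forall>i \<le> L + 1. 0 < ds ! i) \<and>
     (\<forall>l \<le> L. ds ! (l + 1) \<le> W) \<and>
     (\<exists>I \<subseteq> {0..L}.
        (\<forall>l \<in> {0..L} - I. aug_norm (As ! l) (bs ! l) (ds ! (l + 1)) (ds ! l) \<le> 1) \<and>
        (\<forall>l \<in> I. aug_norm (As ! l) (bs ! l) (ds ! (l + 1)) (ds ! l) \<ge> 1) \<and>
        (\<Prod>l \<in> I. aug_norm (As ! l) (bs ! l) (ds ! (l + 1)) (ds ! l)) \<le> K)"

text \<open>Input domain convention: inputs x in R^d whose last coordinate x_(d-1) equals 1
(constant input coordinate).\<close>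
definition hom_inputs :: "nat \<Rightarrow> (nat \<Rightarrow> real) set" where
  "hom_inputs d = {x. x (d - 1) = 1}"

definition NN ::
  "(nat \<Rightarrow> real \<Rightarrow> real) \<Rightarrow> nat \<Rightarrow> nat \<Rightarrow> nat \<Rightarrow> nat \<Rightarrow> real \<Rightarrow> ((nat \<Rightarrow> real) \<Rightarrow> (nat \<Rightarrow> real)) set" where
  "NN \<sigma> d k W L K =
     {(\<lambda>x \<in> hom_inputs d. realize \<sigma> L ds As bs x) | ds As bs. admissible_net d k W L K ds As bs}"

definition SNN ::
  "(nat \<Rightarrow> real \<Rightarrow> real) \<Rightarrow> nat \<Rightarrow> nat \<Rightarrow> nat \<Rightarrow> nat \<Rightarrow> real \<Rightarrow> ((nat \<Rightarrow> real) \<Rightarrow> (nat \<Rightarrow> real)) set" where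
  "SNN \<sigma> d k W L K =
     {(\<lambda>x \<in> hom_inputs d. realize \<sigma> L ds As bs x) | ds As bs.
        admissible_net d k W L K ds As bs \<and> (\<forall>l \<le> L. \<forall>i < ds ! (l + 1). (bs ! l) i = 0)}"

end

theory Submission
  imports Defs
begin

lemma I_transfer:
  fixes old new :: "nat \<Rightarrow> real"
  assumes I: "I \<subseteq> {0..L}"
    and o1: "\<forall>l \<in> {0..L} - I. old l \<le> 1"
    and o2: "\<forall>l \<in> I. old l \<ge> 1"
    and o3: "(\<Prod>l \<in> I. old l) \<le> K"
    and nb: "\<And>l. l \<le> L \<Longrightarrow> new l \<le> max (old l) 1"
  shows "\<exists>I' \<subseteq> {0..L}. (\<forall>l \<in> {0..L} - I'. new l \<le> 1) \<and> (\<forall>l \<in> I'. new l \<ge> 1)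
           \<and> (\<Prod>l \<in> I'. new l) \<le> K"
proof -
  define I' where "I' = {l \<in> I. new l \<ge> 1}"
  have fI: "finite I" using I finite_subset by blast
  have sub: "I' \<subseteq> I" unfolding I'_def by auto
  have fI': "finite I'" using fI sub finite_subset by blast
  have "(\<Prod>l \<in> I'. new l) \<le> (\<Prod>l \<in> I'. old l)"
  proof (rule prod_mono)
    fix l assume "l \<in> I'"
    then show "0 \<le> new l \<and> new l \<le> old l"
      using nb[of l] I o2 unfolding I'_def by (auto simp: max_def split: if_splits)
  qed
  also have "(\<Prod>l \<in> I'. old l) \<le> (\<Prod>l \<in> I. old l)"
  proof -
    have "(\<Prod>l \<in> I. old l) = (\<Prod>l \<in> I'. old l) * (\<Prod>l \<in> I - I'. old l)"
      using fI sub by (metis prod.subset_diff mult.commute)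
    moreover have "1 \<le> (\<Prod>l \<in> I - I'. old l)"
      by (rule prod_ge_1) (use o2 in auto)
    moreover have "0 \<le> (\<Prod>l \<in> I'. old l)"
      by (rule prod_nonneg) (use o2 sub in force)
    ultimately show ?thesis by (metis mult_le_cancel_left1 not_less)
  qed
  finally have "(\<Prod>l \<in> I'. new l) \<le> K" using o3 by linarith
  moreover have "\<forall>l \<in> {0..L} - I'. new l \<le> 1"
  proof
    fix l assume l: "l \<in> {0..L} - I'"
    show "new l \<le> 1"
    proof (cases "l \<in> I")
      case True then show ?thesis using l unfolding I'_def by auto
    next
      case False then have "old l \<le> 1" using o1 l by auto
      then show ?thesis using nb[of l] l by auto
    qed
  qed
  moreover have "\<forall>l \<in> I'. new l \<ge> 1" unfolding I'_def by auto
  moreover have "I' \<subseteq> {0..L}" using sub I by auto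
  ultimately show ?thesis by blast
qed

lemma fold_upt_Suc_app: "fold f [0..<Suc n] x = f n (fold f [0..<n] x)"
  by simp

lemma construct:
  fixes \<sigma> :: "nat \<Rightarrow> real \<Rightarrow> real" and d k W L :: nat and K :: real
  assumes sig: "\<forall>l < L. \<sigma> l 1 = 1"
    and d: "0 < d"
    and adm: "admissible_net d k W L K ds As bs"
  shows "\<exists>ds' As' bs'. admissible_net d k (W + 1) L K ds' As' bs' \<and>
           (\<forall>l \<le> L. \<forall>i < ds' ! (l + 1). (bs' ! l) i = 0) \<and>
           (\<forall>x \<in> hom_inputs d. realize \<sigma> L ds' As' bs' x = realize \<sigma> L ds As bs x)"
proof -
  note A = adm[unfolded admissible_net_def]
  define c where "c n = (if n = 0 then d - 1 else ds ! n)" for n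
  define dsf where "dsf n = (if n = 0 then d else if n \<le> L then ds ! n + 1 else ds ! n)" for n
  define Af where "Af l = (\<lambda>i j. if i < ds ! (l + 1)
        then (if j < ds ! l then (As ! l) i j else 0) + (if j = c l then (bs ! l) i else 0)
        else (if j = c l then 1 else 0))" for l
  define ds' where "ds' = map dsf [0..<L+2]"
  define As' where "As' = map Af [0..<L+1]"
  define bs' where "bs' = replicate (L+1) (\<lambda>_::nat. 0::real)"
  have ds'n: "ds' ! l = dsf l" if "l < L + 2" for l using that unfolding ds'_def by (simp del: upt_Suc)
  have As'n: "As' ! l = Af l" if "l \<le> L" for l using that unfolding As'_def
    by (simp del: upt_Suc)
  have bs'n: "bs' ! l = (\<lambda>_. 0)" if "l \<le> L" for l using that unfolding bs'_def by (simp del: replicate_Suc)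
  have ds0: "ds ! 0 = d" using A by simp
  have dspos: "0 < ds ! i" if "i \<le> L + 1" for i using A that by simp
  have cl: "c l < dsf l" if "l \<le> L" for l using that d unfolding c_def dsf_def by auto
  have mle: "ds ! l \<le> dsf l" for l unfolding dsf_def using ds0 by auto
  have cge: "l \<noteq> 0 \<Longrightarrow> c l = ds ! l" for l unfolding c_def by simp
  have c0: "c 0 < ds ! 0" using d ds0 unfolding c_def by simp
  have aff: "affine_map (Af n) (\<lambda>_. 0) (dsf n) u' i =
      (if i < ds ! (n + 1) then affine_map (As ! n) (bs ! n) (ds ! n) u i else 1)"
    if n: "n \<le> L" and agree: "\<forall>j < ds ! n. u' j = u j" and one: "u' (c n) = 1" for n u u' i
  proof (cases "i < ds ! (n + 1)")
    case True
    have "affine_map (Af n) (\<lambda>_. 0) (dsf n) u' i =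
        (\<Sum>j<dsf n. (if j < ds ! n then (As ! n) i j * u' j else 0)) + (\<Sum>j<dsf n. (if j = c n then (bs ! n) i * u' j else 0))"
    proof -
      have "(\<Sum>j<dsf n. Af n i j * u' j) = (\<Sum>j<dsf n. (if j < ds ! n then (As ! n) i j * u' j else 0) + (if j = c n then (bs ! n) i * u' j else 0))"
        by (intro sum.cong refl) (use True in \<open>simp add: Af_def distrib_right\<close>)
      then show ?thesis unfolding affine_map_def by (simp add: sum.distrib)
    qed
    also have "(\<Sum>j<dsf n. (if j < ds ! n then (As ! n) i j * u' j else 0)) = (\<Sum>j<ds ! n. (As ! n) i j * u' j)"
    proof -
      have "{..<dsf n} \<inter> {j. j < ds ! n} = {..<ds ! n}" using mle[of n] by auto
      then show ?thesis by (simp add: sum.If_cases)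
    qed
    also have "\<dots> = (\<Sum>j<ds ! n. (As ! n) i j * u j)" using agree by simp
    also have "(\<Sum>j<dsf n. (if j = c n then (bs ! n) i * u' j else 0)) = (bs ! n) i"
      using cl[OF n] one by simp
    finally show ?thesis using True unfolding affine_map_def by simp
  next
    case False
    have "affine_map (Af n) (\<lambda>_. 0) (dsf n) u' i = (\<Sum>j<dsf n. (if j = c n then u' j else 0))"
    proof -
      have "(\<Sum>j<dsf n. Af n i j * u' j) = (\<Sum>j<dsf n. (if j = c n then u' j else 0))"
        by (intro sum.cong refl) (use False in \<open>simp add: Af_def\<close>)
      then show ?thesis unfolding affine_map_def by simp
    qed
    also have "\<dots> = 1" using cl[OF n] one by simp
    finally show ?thesis using False by simp
  qed
  have realize_eq: "realize \<sigma> L ds' As' bs' x = realize \<sigma> L ds As bs x" if x: "x \<in> hom_inputs d" for x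
  proof -
    define V where "V n = fold (net_step \<sigma> L ds As bs) [0..<n] x" for n
    define V' where "V' n = fold (net_step \<sigma> L ds' As' bs') [0..<n] x" for n
    have step': "net_step \<sigma> L ds' As' bs' n u = (let v = affine_map (Af n) (\<lambda>_. 0) (dsf n) u
         in if n < L then (\<lambda>i. \<sigma> n (v i)) else v)" if "n \<le> L" for n u
      unfolding net_step_def using that ds'n As'n bs'n by simp
    have inv: "(\<forall>i < ds ! n. V' n i = V n i) \<and> V' n (c n) = 1" if "n \<le> L" for n
      using that
    proof (induction n)
      case 0
      then show ?case using x unfolding V_def V'_def c_def hom_inputs_def by simp
    next
      case (Suc n)
      then have n: "n < L" by simp
      have IH: "\<forall>j < ds ! n. V' n j = V n j" "V' n (c n) = 1" using Suc by auto
      have eq: "V' (Suc n) i = (if i < ds ! (n + 1) then V (Suc n) i else \<sigma> n 1)" for i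
        unfolding V'_def V_def fold_upt_Suc_app
        apply (subst step') using n apply simp
        unfolding V'_def[symmetric] V_def[symmetric]
        using aff[of n "V' n" "V n", OF _ IH] n by (simp add: net_step_def Let_def)
      show ?case using eq sig n cge[of "Suc n"] by simp
    qed
    have fin: "V' (Suc L) i = V (Suc L) i" if "i < ds ! (L + 1)" for i
    proof -
      have IH: "\<forall>j < ds ! L. V' L j = V L j" "V' L (c L) = 1" using inv by auto
      show ?thesis
        unfolding V'_def V_def fold_upt_Suc_app
        apply (subst step') apply simp
        unfolding V'_def[symmetric] V_def[symmetric]
        using aff[of L "V' L" "V L", OF _ IH] that by (simp add: net_step_def Let_def)
    qed
    have "ds' ! Suc L = ds ! Suc L" using ds'n[of "Suc L"] unfolding dsf_def by simp
    then show ?thesis unfolding realize_def V_def[symmetric] V'_def[symmetric] Let_def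
      using fin by auto
  qed
  define old where "old l = aug_norm (As ! l) (bs ! l) (ds ! (l + 1)) (ds ! l)" for l
  define new where "new l = aug_norm (As' ! l) (bs' ! l) (ds' ! (l + 1)) (ds' ! l)" for l
  have nb: "new l \<le> max (old l) 1" if l: "l \<le> L" for l
  proof -
    have new_eq: "new l = Max ((\<lambda>i. \<Sum>j<dsf l. \<bar>Af l i j\<bar>) ` {..<dsf (l + 1)})"
      unfolding new_def aug_norm_def using l ds'n[of l] ds'n[of "l+1"] As'n[OF l] bs'n[OF l] by simp
    have dpos: "0 < dsf (l + 1)" using dspos[of "l+1"] l unfolding dsf_def by auto
    have row_old: "(\<Sum>j<ds ! l. \<bar>(As ! l) i j\<bar>) + \<bar>(bs ! l) i\<bar> \<le> old l" if "i < ds ! (l + 1)" for i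
      unfolding old_def aug_norm_def by (rule Max_ge) (use that in auto)
    show ?thesis unfolding new_eq
    proof (subst Max_le_iff, simp, use dpos in blast, intro ballI)
      fix r assume "r \<in> (\<lambda>i. \<Sum>j<dsf l. \<bar>Af l i j\<bar>) ` {..<dsf (l + 1)}"
      then obtain i where i: "i < dsf (l + 1)" and r: "r = (\<Sum>j<dsf l. \<bar>Af l i j\<bar>)" by auto
      show "r \<le> max (old l) 1"
      proof (cases "i < ds ! (l + 1)")
        case True
        have "r \<le> (\<Sum>j<dsf l. \<bar>if j < ds ! l then (As ! l) i j else 0\<bar> + \<bar>if j = c l then (bs ! l) i else 0\<bar>)"
          unfolding r by (intro sum_mono) (use True in \<open>simp add: Af_def abs_triangle_ineq\<close>)
        also have "\<dots> = (\<Sum>j<dsf l. (if j < ds ! l then \<bar>(As ! l) i j\<bar> else 0)) + (\<Sum>j<dsf l. (if j = c l then \<bar>(bs ! l) i\<bar> else 0))"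
          unfolding sum.distrib[symmetric] by (intro sum.cong refl) simp
        also have "(\<Sum>j<dsf l. (if j < ds ! l then \<bar>(As ! l) i j\<bar> else 0)) = (\<Sum>j<ds ! l. \<bar>(As ! l) i j\<bar>)"
        proof -
          have "{..<dsf l} \<inter> {j. j < ds ! l} = {..<ds ! l}" using mle[of l] by auto
          then show ?thesis by (simp add: sum.If_cases)
        qed
        also have "(\<Sum>j<dsf l. (if j = c l then \<bar>(bs ! l) i\<bar> else 0)) = \<bar>(bs ! l) i\<bar>"
          using cl[OF l] by simp
        finally show ?thesis using row_old[OF True] by linarith
      next
        case False
        have "r = (\<Sum>j<dsf l. (if j = c l then 1 else 0))"
          unfolding r by (intro sum.cong refl) (use False in \<open>simp add: Af_def\<close>)
        also have "\<dots> = 1" using cl[OF l] by simp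
        finally show ?thesis by simp
      qed
    qed
  qed
  obtain I where I: "I \<subseteq> {0..L}" "\<forall>l \<in> {0..L} - I. old l \<le> 1" "\<forall>l \<in> I. old l \<ge> 1"
      "(\<Prod>l \<in> I. old l) \<le> K"
    using A unfolding old_def by blast
  obtain I' where I': "I' \<subseteq> {0..L}" "\<forall>l \<in> {0..L} - I'. new l \<le> 1" "\<forall>l \<in> I'. new l \<ge> 1"
      "(\<Prod>l \<in> I'. new l) \<le> K"
    using I_transfer[OF I nb] by blast
  have lens: "length ds' = L + 2" "length As' = L + 1" "length bs' = L + 1"
    unfolding ds'_def As'_def bs'_def by simp_all
  have d0: "ds' ! 0 = d" using ds'n[of 0] unfolding dsf_def by simp
  have dL: "ds' ! (L + 1) = k" using ds'n[of "L+1"] A unfolding dsf_def by simp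
  have dp: "\<forall>i \<le> L + 1. 0 < ds' ! i" using ds'n dspos d unfolding dsf_def by auto
  have dw: "\<forall>l \<le> L. ds' ! (l + 1) \<le> W + 1" using ds'n A unfolding dsf_def by fastforce
  have adm': "admissible_net d k (W + 1) L K ds' As' bs'"
    unfolding admissible_net_def using lens d0 dL dp dw I' unfolding new_def by blast
  have bz: "\<forall>l \<le> L. \<forall>i < ds' ! (l + 1). (bs' ! l) i = 0" using bs'n by simp
  show ?thesis using adm' bz realize_eq by blast
qed

theorem proposition1:
  fixes \<sigma> :: "nat \<Rightarrow> real \<Rightarrow> real" and d k W L :: nat and K :: real
  assumes "\<forall>l < L. \<sigma> l 1 = 1"
    and "0 < d" and "0 < k"
    and "K > 0"
  shows "SNN \<sigma> d k W L K \<subseteq> NN \<sigma> d k W L K \<and> NN \<sigma> d k W L K \<subseteq> SNN \<sigma> d k (W + 1) L K"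
proof
  show "SNN \<sigma> d k W L K \<subseteq> NN \<sigma> d k W L K"
    unfolding SNN_def NN_def by blast
  show "NN \<sigma> d k W L K \<subseteq> SNN \<sigma> d k (W + 1) L K"
  proof
    fix f assume "f \<in> NN \<sigma> d k W L K"
    then obtain ds As bs where f: "f = (\<lambda>x \<in> hom_inputs d. realize \<sigma> L ds As bs x)"
      and adm: "admissible_net d k W L K ds As bs" unfolding NN_def by blast
    obtain ds' As' bs' where a: "admissible_net d k (W + 1) L K ds' As' bs'"
      and b: "\<forall>l \<le> L. \<forall>i < ds' ! (l + 1). (bs' ! l) i = 0"
      and r: "\<forall>x \<in> hom_inputs d. realize \<sigma> L ds' As' bs' x = realize \<sigma> L ds As bs x"
      using construct[of L \<sigma> d k W K ds As bs, OF assms(1,2) adm] by blast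
    have "f = (\<lambda>x \<in> hom_inputs d. realize \<sigma> L ds' As' bs' x)"
      unfolding f using r by (intro restrict_ext) simp
    then show "f \<in> SNN \<sigma> d k (W + 1) L K" unfolding SNN_def using a b by blast
  qed
qed

end
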